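(* Let $a>0$. Let $\theta$ have Beta$(a,a)$ density $B(a,a)^{-1}\theta^{a-1}(1-\theta)^{a-1}$ on $(0,1]$ and, conditionally on $\theta$, let $\mathbf{x}\in\mathbb{R}^N$ have i.i.d. $\mathcal{N}(0,\theta)$ components. For $N\neq 4(a-1)$ set $\gamma=\mathbf{x}^{T}\mathbf{x}/N$, $\alpha=1-4(a-1)/N$, $\beta=1-2(a-1)/N+\gamma$, and \[ \widehat{\theta}^{\mathrm{MAP}}(\mathbf{x})=\frac{\beta-\sqrt{\beta^2-4\alpha\gamma}}{2\alpha},\qquad \widehat{\theta}_2=\frac{\beta+\sqrt{\beta^2-4\alpha\gamma}}{2\alpha}, \] ($\widehat{\theta}^{\mathrm{MAP}}$ being the maximizer over $\theta\in[0,1]$ of the posterior density $p(\theta\mid\mathbf{x})$). Then, as $N\to\infty$ (under the joint distribution of $(\mathbf{x},\theta)$): (i) $\widehat{\theta}^{\mathrm{MAP}}(\mathbf{x})$ is asymptotically equivalent in probability to $\widehat{\theta}^{\mathrm{ML}}(\mathbf{x})=\mathbf{x}^{T}\mathbf{x}/N$, i.e. $\widehat{\theta}^{\mathrm{MAP}}(\mathbf{x})=\frac{\mathbf{x}^{T}\mathbf{x}}{N}(1+\varepsilon_N)$ with $\varepsilon_N\to 0$ in probability; and (ii) $\widehat{\theta}_2\to 1$ in probability.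
   Context: Convergence in probability: $v_N\to\ell$ in probability means for every $\delta>0$, $\Pr(|v_N-\ell|<\delta)\to 1$ as $N\to\infty$. Asymptotic equivalence in probability $v_N\sim w_N$ means $v_N=w_N(1+\varepsilon_N)$ with $\varepsilon_N\to0$ in probability. *)

theory Defs
  imports "HOL-Probability.Probability"
begin

definition beta_prior_density :: "real \<Rightarrow> real \<Rightarrow> real" where
  "beta_prior_density a t =
     (if 0 < t \<and> t \<le> 1 then t powr (a - 1) * (1 - t) powr (a - 1) / Beta a a else 0)"

text \<open>Joint law of (theta, x) with x in R^N (coordinates indexed by {..<N}):
  theta ~ Beta(a,a); given theta, x has i.i.d. N(0,theta) components
  (normal_density takes the standard deviation, here sqrt theta).\<close>
definition joint_model :: "real \<Rightarrow> nat \<Rightarrow> (real \<times> (nat \<Rightarrow> real)) measure" where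
  "joint_model a N =
     bind (density lborel (beta_prior_density a))
       (\<lambda>t. distr (PiM {..<N} (\<lambda>_. density lborel (normal_density 0 (sqrt t))))
                  (borel \<Otimes>\<^sub>M PiM {..<N} (\<lambda>_. borel)) (\<lambda>x. (t, x)))"

definition gamma_stat :: "nat \<Rightarrow> (nat \<Rightarrow> real) \<Rightarrow> real" where
  "gamma_stat N x = (\<Sum>i<N. (x i)\<^sup>2) / real N"

definition alpha_coef :: "real \<Rightarrow> nat \<Rightarrow> real" where
  "alpha_coef a N = 1 - 4 * (a - 1) / real N"

definition beta_coef :: "real \<Rightarrow> nat \<Rightarrow> (nat \<Rightarrow> real) \<Rightarrow> real" where
  "beta_coef a N x = 1 - 2 * (a - 1) / real N + gamma_stat N x"

definition theta_MAP :: "real \<Rightarrow> nat \<Rightarrow> (nat \<Rightarrow> real) \<Rightarrow> real" where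
  "theta_MAP a N x =
     (beta_coef a N x - sqrt ((beta_coef a N x)\<^sup>2 - 4 * alpha_coef a N * gamma_stat N x))
       / (2 * alpha_coef a N)"

definition theta_2 :: "real \<Rightarrow> nat \<Rightarrow> (nat \<Rightarrow> real) \<Rightarrow> real" where
  "theta_2 a N x =
     (beta_coef a N x + sqrt ((beta_coef a N x)\<^sup>2 - 4 * alpha_coef a N * gamma_stat N x))
       / (2 * alpha_coef a N)"

end

theory Submission
  imports Defs
begin

definition ndm :: "real \<Rightarrow> real measure" where
  "ndm t = density lborel (normal_density 0 (sqrt t))"

lemma sets_ndm[simp, measurable_cong]: "sets (ndm t) = sets borel"
  by (simp add: ndm_def)

lemma space_ndm[simp]: "space (ndm t) = UNIV"
  by (simp add: ndm_def)

lemma prob_ndm: "t \<noteq> 0 \<Longrightarrow> prob_space (ndm t)"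
proof -
  assume "t \<noteq> 0"
  have "normal_density 0 (sqrt t) = normal_density 0 \<bar>sqrt t\<bar>"
    by (simp add: normal_density_def fun_eq_iff)
  moreover have "0 < \<bar>sqrt t\<bar>" using \<open>t \<noteq> 0\<close> by simp
  ultimately show ?thesis unfolding ndm_def
    using prob_space_normal_density by metis
qed

lemma ndm0: "emeasure (ndm 0) A = 0"
proof -
  have "normal_density 0 (sqrt 0) = (\<lambda>_. 0)"
    by (simp add: normal_density_def fun_eq_iff)
  then show ?thesis unfolding ndm_def
    by (cases "A \<in> sets borel") (simp_all add: emeasure_density emeasure_notin_sets)
qed

lemma subprob_ndm: "subprob_space (ndm t)"
proof (cases "t = 0")
  case True
  then show ?thesis by (intro subprob_spaceI) (auto simp: ndm0)
next
  case False
  then show ?thesis using prob_ndm prob_space_imp_subprob_space by blast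
qed

lemma psf_ndm: "product_sigma_finite (\<lambda>_. ndm t)"
proof (intro product_sigma_finite.intro)
  fix i :: nat
  interpret subprob_space "ndm t" by (rule subprob_ndm)
  show "sigma_finite_measure (ndm t)" by (rule sigma_finite_measure_axioms)
qed

lemma psf_lborel: "product_sigma_finite (\<lambda>_. lborel :: real measure)"
  by (intro product_sigma_finite.intro lborel.sigma_finite_measure_axioms)

definition Qm :: "nat \<Rightarrow> real \<Rightarrow> (nat \<Rightarrow> real) measure" where
  "Qm N t = PiM {..<N} (\<lambda>_. ndm t)"

definition Sm :: "nat \<Rightarrow> (real \<times> (nat \<Rightarrow> real)) measure" where
  "Sm N = borel \<Otimes>\<^sub>M PiM {..<N} (\<lambda>_. borel)"

definition kern :: "nat \<Rightarrow> real \<Rightarrow> (real \<times> (nat \<Rightarrow> real)) measure" where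
  "kern N t = distr (Qm N t) (Sm N) (\<lambda>x. (t, x))"

definition Pm :: "real \<Rightarrow> real measure" where
  "Pm a = density lborel (beta_prior_density a)"

lemma joint_alt: "joint_model a N = bind (Pm a) (kern N)"
  unfolding joint_model_def Pm_def kern_def[abs_def] Qm_def Sm_def ndm_def by simp

lemma sets_Qm[simp, measurable_cong]: "sets (Qm N t) = sets (PiM {..<N} (\<lambda>_. borel :: real measure))"
  unfolding Qm_def by (intro sets_PiM_cong) auto

lemma space_Qm[simp]: "space (Qm N t) = space (PiM {..<N} (\<lambda>_. borel :: real measure))"
  using sets_Qm sets_eq_imp_space_eq by blast

lemma sets_PiM_lborel[measurable_cong]: "sets (PiM I (\<lambda>_. lborel :: real measure)) = sets (PiM I (\<lambda>_. borel :: real measure))"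
  by (intro sets_PiM_cong) auto

lemma indicator_PiE_prod:
  assumes "x \<in> extensional I" "finite I"
  shows "(indicator (PiE I A) x :: ennreal) = (\<Prod>i\<in>I. indicator (A i) (x i))"
proof (cases "x \<in> PiE I A")
  case True
  then show ?thesis by (auto simp: indicator_def PiE_iff intro!: prod.neutral[symmetric])
next
  case False
  then obtain i where "i \<in> I" "x i \<notin> A i" using assms(1) by (auto simp: PiE_iff)
  then show ?thesis using False assms(2)
    by (simp add: indicator_def) (metis (mono_tags, lifting) prod_zero)
qed

lemma Qm_density:
  "Qm N t = density (PiM {..<N} (\<lambda>_. lborel)) (\<lambda>x. \<Prod>i<N. ennreal (normal_density 0 (sqrt t) (x i)))"
proof -
  interpret product_sigma_finite "\<lambda>_. ndm t" by (rule psf_ndm)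
  interpret L: product_sigma_finite "\<lambda>_::nat. lborel :: real measure" by (rule psf_lborel)
  show ?thesis unfolding Qm_def
  proof (rule PiM_eqI[symmetric])
    show "finite {..<N}" by simp
    show "sets (density (PiM {..<N} (\<lambda>_. lborel)) (\<lambda>x. \<Prod>i<N. ennreal (normal_density 0 (sqrt t) (x i))))
       = sets (PiM {..<N} (\<lambda>_. ndm t))"
      by (simp add: sets_PiM_lborel) (intro sets_PiM_cong, auto)
    fix A assume A: "\<And>i. i \<in> {..<N} \<Longrightarrow> A i \<in> sets (ndm t)"
    have AP: "PiE {..<N} A \<in> sets (PiM {..<N} (\<lambda>_. lborel :: real measure))"
      using A by (intro sets_PiM_I_finite) auto
    have "emeasure (density (PiM {..<N} (\<lambda>_. lborel)) (\<lambda>x. \<Prod>i<N. ennreal (normal_density 0 (sqrt t) (x i)))) (PiE {..<N} A)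
        = \<integral>\<^sup>+x. (\<Prod>i<N. ennreal (normal_density 0 (sqrt t) (x i))) * indicator (PiE {..<N} A) x \<partial>PiM {..<N} (\<lambda>_. lborel)"
      by (rule emeasure_density[OF _ AP]) measurable
    also have "\<dots> = \<integral>\<^sup>+x. (\<Prod>i<N. ennreal (normal_density 0 (sqrt t) (x i)) * indicator (A i) (x i)) \<partial>PiM {..<N} (\<lambda>_. lborel)"
      by (intro nn_integral_cong) (simp add: indicator_PiE_prod space_PiM PiE_iff prod.distrib)
    also have "\<dots> = (\<Prod>i<N. \<integral>\<^sup>+z. ennreal (normal_density 0 (sqrt t) z) * indicator (A i) z \<partial>lborel)"
      using A by (intro L.product_nn_integral_prod) auto
    also have "\<dots> = (\<Prod>i<N. emeasure (ndm t) (A i))"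
      using A by (intro prod.cong refl) (simp add: ndm_def emeasure_density)
    finally show "emeasure (density (PiM {..<N} (\<lambda>_. lborel)) (\<lambda>x. \<Prod>i<N. ennreal (normal_density 0 (sqrt t) (x i)))) (PiE {..<N} A)
        = (\<Prod>i\<in>{..<N}. emeasure (ndm t) (A i))" by simp
  qed
qed

lemma subprob_Qm: "subprob_space (Qm N t)"
proof (rule subprob_spaceI)
  interpret product_sigma_finite "\<lambda>_. ndm t" by (rule psf_ndm)
  have "emeasure (Qm N t) (space (Qm N t)) = emeasure (Qm N t) (PiE {..<N} (\<lambda>_. UNIV))"
    by (simp add: space_PiM)
  also have "\<dots> = (\<Prod>i<N. emeasure (ndm t) UNIV)"
    unfolding Qm_def by (subst emeasure_PiM) auto
  also have "\<dots> \<le> 1"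
  proof (cases "t = 0")
    case True then show ?thesis by (cases N) (simp_all add: ndm0)
  next
    case False
    then interpret prob_space "ndm t" by (rule prob_ndm)
    show ?thesis using emeasure_space_1 by simp
  qed
  finally show "emeasure (Qm N t) (space (Qm N t)) \<le> 1" .
  show "space (Qm N t) \<noteq> {}" by (simp add: space_PiM PiE_eq_empty_iff)
qed

lemma prob_Qm: "t \<noteq> 0 \<Longrightarrow> prob_space (Qm N t)"
  unfolding Qm_def by (intro prob_space_PiM prob_ndm)

lemma emeasure_kern:
  assumes X: "X \<in> sets (Sm N)"
  shows "emeasure (kern N t) X = emeasure (Qm N t) {x \<in> space (Qm N t). (t, x) \<in> X}"
proof -
  have "(\<lambda>x. (t, x)) \<in> measurable (Qm N t) (Sm N)"
    unfolding Sm_def by measurable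
  then show ?thesis unfolding kern_def using X
    by (subst emeasure_distr) (auto intro!: arg_cong[where f="emeasure (Qm N t)"])
qed

lemma kern_meas: "kern N \<in> measurable borel (subprob_algebra (Sm N))"
proof (rule measurable_subprob_algebra)
  fix t :: real
  show "subprob_space (kern N t)" unfolding kern_def
    by (rule subprob_space.subprob_space_distr[OF subprob_Qm]) (auto simp: Sm_def space_pair_measure space_PiM)
  show "sets (kern N t) = sets (Sm N)" by (simp add: kern_def)
next
  fix X assume X[measurable]: "X \<in> sets (Sm N)"
  interpret L: product_sigma_finite "\<lambda>_::nat. lborel :: real measure" by (rule psf_lborel)
  interpret LP: sigma_finite_measure "PiM {..<N} (\<lambda>_. lborel :: real measure)"
    by (rule L.sigma_finite) simp
  have eq: "emeasure (kern N t) X = \<integral>\<^sup>+x. (\<Prod>i<N. ennreal (normal_density 0 (sqrt t) (x i))) * indicator X (t, x) \<partial>PiM {..<N} (\<lambda>_. lborel)" for t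
  proof -
    have m: "{x \<in> space (Qm N t). (t, x) \<in> X} \<in> sets (PiM {..<N} (\<lambda>_. lborel :: real measure))"
      using X unfolding Sm_def by (simp add: sets_PiM_lborel) measurable
    show ?thesis
      unfolding emeasure_kern[OF X]
      apply (subst Qm_density)
      apply (subst emeasure_density[OF _ m])
       apply measurable
      apply (intro nn_integral_cong)
      apply (auto simp: indicator_def space_PiM)
      done
  qed
  show "(\<lambda>t. emeasure (kern N t) X) \<in> borel_measurable borel"
    unfolding eq
    apply (rule LP.borel_measurable_nn_integral)
    using X unfolding Sm_def normal_density_def
    apply measurable
    done
qed

lemma ndm_moment:
  assumes "t > 0"
  shows "has_bochner_integral (ndm t) (\<lambda>z. z^(2*k)) (fact (2*k) / ((2/t)^k * fact k))"
proof -
  have "has_bochner_integral lborel (\<lambda>x. normal_density 0 (sqrt t) x * (x - 0) ^ (2 * k))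
           (fact (2 * k) / ((2 / (sqrt t)\<^sup>2)^k * fact k))"
    by (rule normal_moment_even) (use assms in simp)
  then show ?thesis unfolding ndm_def using assms
    by (intro has_bochner_integral_density) auto
qed

lemma ndm_integrable_pow: "t > 0 \<Longrightarrow> integrable (ndm t) (\<lambda>z. z^k)"
  unfolding ndm_def
  using integrable_normal_moment[of "sqrt t" 0 k]
  by (subst integrable_density) auto

lemma ndm_y:
  assumes "t > 0"
  shows "integrable (ndm t) (\<lambda>z. z\<^sup>2 - t)" "integral\<^sup>L (ndm t) (\<lambda>z. z\<^sup>2 - t) = 0"
    "integrable (ndm t) (\<lambda>z. (z\<^sup>2 - t) * (z\<^sup>2 - t))"
    "integral\<^sup>L (ndm t) (\<lambda>z. (z\<^sup>2 - t) * (z\<^sup>2 - t)) = 2 * t\<^sup>2"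
proof -
  interpret prob_space "ndm t" using assms by (intro prob_ndm) auto
  have pU: "prob UNIV = 1" using prob_space by simp
  have i2: "integrable (ndm t) (\<lambda>z. z^2)" and i4: "integrable (ndm t) (\<lambda>z. z^4)"
    using ndm_integrable_pow assms by auto
  have m2: "integral\<^sup>L (ndm t) (\<lambda>z. z^2) = t"
    using has_bochner_integral_integral_eq[OF ndm_moment[OF assms, of 1]] assms by simp
  have m4: "integral\<^sup>L (ndm t) (\<lambda>z. z^4) = 3 * t\<^sup>2"
    using has_bochner_integral_integral_eq[OF ndm_moment[OF assms, of 2]] assms
    by (simp add: fact_numeral power2_eq_square field_simps)
  show "integrable (ndm t) (\<lambda>z. z\<^sup>2 - t)" using i2 by auto
  show "integral\<^sup>L (ndm t) (\<lambda>z. z\<^sup>2 - t) = 0" using i2 m2 by (simp add: pU)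
  have eq: "(\<lambda>z. (z\<^sup>2 - t) * (z\<^sup>2 - t)) = (\<lambda>z. z^4 - 2 * t * z^2 + t\<^sup>2)"
    by (auto simp: fun_eq_iff algebra_simps power2_eq_square power4_eq_xxxx)
  show "integrable (ndm t) (\<lambda>z. (z\<^sup>2 - t) * (z\<^sup>2 - t))" unfolding eq using i2 i4 by auto
  show "integral\<^sup>L (ndm t) (\<lambda>z. (z\<^sup>2 - t) * (z\<^sup>2 - t)) = 2 * t\<^sup>2" unfolding eq
    using i2 i4 m2 m4 by (simp add: pU power2_eq_square)
qed

lemma meas_gamma[measurable]: "gamma_stat N \<in> borel_measurable (PiM {..<N} (\<lambda>_. borel))"
  unfolding gamma_stat_def by measurable

lemma cheb:
  assumes t: "0 < t" "t \<le> 1" and N: "0 < N" and eta: "0 < \<eta>"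
  shows "ennreal (1 - 2 / (real N * \<eta>\<^sup>2)) \<le> emeasure (Qm N t) {x \<in> space (Qm N t). \<bar>gamma_stat N x - t\<bar> < \<eta>}"
proof -
  interpret prob_space "Qm N t" using t by (intro prob_Qm) auto
  interpret product_sigma_finite "\<lambda>_. ndm t" by (rule psf_ndm)
  interpret P1: prob_space "ndm t" using t by (intro prob_ndm) auto
  define y where "y z = z\<^sup>2 - t" for z :: real
  define h where "h i j k z = (if k = i then y z else 1) * (if k = j then y z else 1)" for i j k :: nat and z
  have prod_h: "(\<Prod>k<N. h i j k (x k)) = y (x i) * y (x j)" if "i < N" "j < N" for i j x
    using that by (simp add: h_def prod.distrib prod.delta)
  define u where "u x = (\<Sum>i<N. y (x i))\<^sup>2" for x :: "nat \<Rightarrow> real"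
  have u_eq: "u x = (\<Sum>i<N. \<Sum>j<N. \<Prod>k<N. h i j k (x k))" for x
    unfolding u_def power2_eq_square sum_product by (intro sum.cong refl) (simp add: prod_h)
  have ih: "integrable (ndm t) (h i j k)" for i j k
    using ndm_y[OF t(1)] by (cases "k = i"; cases "k = j") (auto simp: h_def[abs_def] y_def[abs_def])
  have Ih: "integral\<^sup>L (ndm t) (h i j k) = (if k = i \<and> k = j then 2 * t\<^sup>2 else if k = i \<or> k = j then 0 else 1)" for i j k
  proof -
    have pU: "P1.prob UNIV = 1" using P1.prob_space by simp
    show ?thesis
      using ndm_y[OF t(1)] by (cases "k = i"; cases "k = j") (auto simp: h_def[abs_def] y_def[abs_def] pU)
  qed
  have E: "integral\<^sup>L (Qm N t) (\<lambda>x. \<Prod>k<N. h i j k (x k)) = (if i = j then 2 * t\<^sup>2 else 0)" if "i < N" "j < N" for i j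
  proof -
    have "integral\<^sup>L (Qm N t) (\<lambda>x. \<Prod>k<N. h i j k (x k)) = (\<Prod>k<N. integral\<^sup>L (ndm t) (h i j k))"
      unfolding Qm_def by (rule product_integral_prod) (auto intro: ih)
    also have "\<dots> = (if i = j then 2 * t\<^sup>2 else 0)"
    proof (cases "i = j")
      case True
      have "(\<Prod>k<N. integral\<^sup>L (ndm t) (h i j k)) = (\<Prod>k<N. if k = j then 2 * t\<^sup>2 else 1)"
        using True by (intro prod.cong) (auto simp: Ih)
      then show ?thesis using that True by (simp add: prod.delta)
    next
      case False
      then show ?thesis using that by (simp add: Ih) (metis (mono_tags, lifting) lessThan_iff finite_lessThan prod_zero)
    qed
    finally show ?thesis .
  qed
  have iP: "integrable (Qm N t) (\<lambda>x. \<Prod>k<N. h i j k (x k))" for i j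
    unfolding Qm_def by (rule product_integrable_prod) (auto intro: ih)
  have iu: "integrable (Qm N t) u"
    unfolding u_eq using iP by auto
  have Eu: "integral\<^sup>L (Qm N t) u = 2 * real N * t\<^sup>2"
  proof -
    have "integral\<^sup>L (Qm N t) u = (\<Sum>i<N. \<Sum>j<N. integral\<^sup>L (Qm N t) (\<lambda>x. \<Prod>k<N. h i j k (x k)))"
      unfolding u_eq using iP by (simp add: integral_sum)
    also have "\<dots> = (\<Sum>i<N. 2 * t\<^sup>2)"
      by (intro sum.cong refl) (simp add: E if_distrib sum.delta cong: if_cong)
    finally show ?thesis by simp
  qed
  have meas_u[measurable]: "u \<in> borel_measurable (Qm N t)"
    unfolding u_def y_def by measurable
  have markov: "measure (Qm N t) {x \<in> space (Qm N t). u x \<ge> (real N * \<eta>)\<^sup>2} \<le> integral\<^sup>L (Qm N t) u / (real N * \<eta>)\<^sup>2"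
    by (rule integral_Markov_inequality_measure[OF iu, where A="space (Qm N t)"])
       (use N eta in \<open>auto simp: u_def\<close>)
  have sub: "{x \<in> space (Qm N t). \<not> \<bar>gamma_stat N x - t\<bar> < \<eta>} \<subseteq> {x \<in> space (Qm N t). u x \<ge> (real N * \<eta>)\<^sup>2}"
  proof safe
    fix x assume "x \<in> space (Qm N t)" "\<not> \<bar>gamma_stat N x - t\<bar> < \<eta>"
    have "(\<Sum>i<N. y (x i)) = real N * (gamma_stat N x - t)"
      using N by (simp add: y_def gamma_stat_def sum_subtractf algebra_simps)
    then have "\<bar>\<Sum>i<N. y (x i)\<bar> \<ge> \<bar>real N * \<eta>\<bar>"
      using \<open>\<not> \<bar>gamma_stat N x - t\<bar> < \<eta>\<close> N eta by (simp add: abs_mult mult_left_mono)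
    then show "u x \<ge> (real N * \<eta>)\<^sup>2" unfolding u_def by (simp add: abs_le_square_iff)
  qed
  have "prob {x \<in> space (Qm N t). \<not> \<bar>gamma_stat N x - t\<bar> < \<eta>} \<le> 2 * real N * t\<^sup>2 / (real N * \<eta>)\<^sup>2"
    using finite_measure_mono[OF sub] markov Eu by (auto simp del: power_mult_distrib)
  also have "\<dots> = 2 * t\<^sup>2 / (real N * \<eta>\<^sup>2)"
    using N eta by (simp add: power2_eq_square field_simps)
  also have "\<dots> \<le> 2 / (real N * \<eta>\<^sup>2)"
    using t N eta by (intro divide_right_mono) (auto simp: power_le_one)
  finally have b: "prob {x \<in> space (Qm N t). \<not> \<bar>gamma_stat N x - t\<bar> < \<eta>} \<le> 2 / (real N * \<eta>\<^sup>2)" .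
  have "{x \<in> space (Qm N t). \<not> \<bar>gamma_stat N x - t\<bar> < \<eta>} = space (Qm N t) - {x \<in> space (Qm N t). \<bar>gamma_stat N x - t\<bar> < \<eta>}"
    by auto
  then have "prob {x \<in> space (Qm N t). \<bar>gamma_stat N x - t\<bar> < \<eta>} \<ge> 1 - 2 / (real N * \<eta>\<^sup>2)"
    using b prob_compl[of "{x \<in> space (Qm N t). \<bar>gamma_stat N x - t\<bar> < \<eta>}"] by simp
  then show ?thesis by (simp add: emeasure_eq_measure ennreal_leI)
qed

lemma tri3: "\<bar>-(x::real) - y + z\<bar> \<le> \<bar>x\<bar> + \<bar>y\<bar> + \<bar>z\<bar>" by arith

lemma det:
  fixes c \<delta> u \<gamma> \<alpha> \<beta> :: real
  assumes c: "0 < c" "c \<le> 1/4" and d: "0 < \<delta>" and g: "c/2 \<le> \<gamma>" "\<gamma> \<le> 1 - c/2"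
    and u: "\<bar>u\<bar> \<le> 1/8" "\<bar>u\<bar> \<le> c\<^sup>2 * min \<delta> 1 / 200"
    and al: "\<alpha> = 1 - 4*u" and be: "\<beta> = 1 - 2*u + \<gamma>"
  shows "\<bar>(\<beta> - sqrt (\<beta>\<^sup>2 - 4*\<alpha>*\<gamma>)) / (2*\<alpha>) / \<gamma> - 1\<bar> < \<delta>"
    and "\<bar>(\<beta> + sqrt (\<beta>\<^sup>2 - 4*\<alpha>*\<gamma>)) / (2*\<alpha>) - 1\<bar> < \<delta>"
proof -
  define D where "D = \<beta>\<^sup>2 - 4*\<alpha>*\<gamma>"
  have Dd: "D - (1-\<gamma>)\<^sup>2 = 4*u*(3*\<gamma> - 1 + u)"
    unfolding D_def al be by (simp add: algebra_simps power2_eq_square)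
  have "\<bar>3*\<gamma> - 1 + u\<bar> \<le> 13/4" using g u(1) c by arith
  then have "\<bar>4*u\<bar> * \<bar>3*\<gamma> - 1 + u\<bar> \<le> \<bar>4*u\<bar> * (13/4)" by (intro mult_left_mono) auto
  then have Db: "\<bar>D - (1-\<gamma>)\<^sup>2\<bar> \<le> 13 * \<bar>u\<bar>" unfolding Dd by (simp add: abs_mult)
  have c2: "c\<^sup>2 \<le> c" using c by (simp add: power2_eq_square mult_le_cancel_left1)
  have "c\<^sup>2 * min \<delta> 1 \<le> c\<^sup>2 * 1" by (rule mult_left_mono) auto
  then have uc2: "\<bar>u\<bar> \<le> c\<^sup>2 / 200" using u(2) by linarith
  have g1: "1 - \<gamma> \<ge> c/2" using g by simp
  have "(1-\<gamma>)\<^sup>2 \<ge> (c/2)\<^sup>2" using g1 c by (intro power_mono) auto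
  then have "(1-\<gamma>)\<^sup>2 \<ge> c\<^sup>2/4" by (simp add: power_divide)
  then have Dpos: "D \<ge> c\<^sup>2/8" using Db uc2 by linarith
  have "c\<^sup>2/8 \<ge> 0" by simp
  then have D0: "D \<ge> 0" using Dpos by linarith
  define s where "s = sqrt D"
  have s0: "s \<ge> 0" and s2: "s\<^sup>2 = D" using D0 by (auto simp: s_def)
  define E where "E = s - (1 - \<gamma>)"
  have "E * (s + (1 - \<gamma>)) = D - (1-\<gamma>)\<^sup>2" unfolding E_def using s2 by (simp add: algebra_simps power2_eq_square)
  then have "\<bar>E\<bar> * \<bar>s + (1 - \<gamma>)\<bar> \<le> 13 * \<bar>u\<bar>" using Db by (simp add: abs_mult)
  moreover have sg: "s + (1 - \<gamma>) \<ge> c/2" using s0 g1 by simp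
  ultimately have "\<bar>E\<bar> * (s + (1 - \<gamma>)) \<le> 13 * \<bar>u\<bar>" using c by simp
  moreover have "\<bar>E\<bar> * (c/2) \<le> \<bar>E\<bar> * (s + (1 - \<gamma>))" using sg by (rule mult_left_mono) simp
  ultimately have "\<bar>E\<bar> * (c/2) \<le> 13 * \<bar>u\<bar>" by linarith
  then have Eb: "\<bar>E\<bar> \<le> 26 * \<bar>u\<bar> / c" using c by (simp add: field_simps)
  have uc: "\<bar>u\<bar> \<le> \<bar>u\<bar> / c" using c by (simp add: field_simps mult_left_le_one_le)
  have ucc: "\<bar>u\<bar> / c \<le> \<bar>u\<bar> / c\<^sup>2" using c c2 by (intro divide_left_mono) auto
  define w where "w = \<bar>u\<bar> / c\<^sup>2"
  have "w \<le> (c\<^sup>2 * min \<delta> 1 / 200) / c\<^sup>2" unfolding w_def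
    by (rule divide_right_mono[OF u(2)]) simp
  also have "\<dots> = min \<delta> 1 / 200" using c by simp
  finally have w: "w \<le> min \<delta> 1 / 200" .
  have md: "min \<delta> 1 \<le> \<delta>" by simp
  have a_ge: "\<alpha> \<ge> 1/2" using u(1) al by arith
  have gpos: "\<gamma> > 0" using g c by simp
  have eq1: "(\<beta> - s) / (2*\<alpha>) / \<gamma> - 1 = (- E - 2*u + 8*u*\<gamma>) / (2*\<alpha>*\<gamma>)"
    using a_ge gpos unfolding E_def al be by (simp add: field_simps)
  have "\<bar>- E - 2*u + 8*u*\<gamma>\<bar> \<le> \<bar>E\<bar> + \<bar>2*u\<bar> + \<bar>8*u*\<gamma>\<bar>" by (rule tri3)
  also have "\<dots> = \<bar>E\<bar> + 2*\<bar>u\<bar> + 8*(\<bar>u\<bar>*\<gamma>)" using gpos by (simp add: abs_mult)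
  also have "\<bar>u\<bar>*\<gamma> \<le> \<bar>u\<bar>" using g c by (intro mult_left_le) auto
  then have "\<bar>E\<bar> + 2*\<bar>u\<bar> + 8*(\<bar>u\<bar>*\<gamma>) \<le> 36 * (\<bar>u\<bar> / c)" using Eb uc by linarith
  finally have n1: "\<bar>- E - 2*u + 8*u*\<gamma>\<bar> \<le> 36 * (\<bar>u\<bar> / c)" .
  have "(1/2)*(c/2) \<le> \<alpha>*\<gamma>" by (rule mult_mono) (use a_ge g c in auto)
  then have den1: "2*\<alpha>*\<gamma> \<ge> c/2" by linarith
  have "\<bar>(- E - 2*u + 8*u*\<gamma>) / (2*\<alpha>*\<gamma>)\<bar> = \<bar>- E - 2*u + 8*u*\<gamma>\<bar> / (2*\<alpha>*\<gamma>)"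
    using den1 c by (simp add: abs_div)
  also have "\<dots> \<le> 36 * (\<bar>u\<bar> / c) / (c/2)"
    by (rule frac_le[OF _ n1 _ den1]) (use c in auto)
  also have "\<dots> = 72 * w" unfolding w_def using c by (simp add: field_simps power2_eq_square)
  also have "\<dots> < \<delta>" using w md d by linarith
  finally show "\<bar>(\<beta> - sqrt (\<beta>\<^sup>2 - 4*\<alpha>*\<gamma>)) / (2*\<alpha>) / \<gamma> - 1\<bar> < \<delta>"
    using eq1 by (simp add: s_def D_def)
  have eq2: "(\<beta> + s) / (2*\<alpha>) - 1 = (E + 6*u) / (2*\<alpha>)"
    using a_ge unfolding E_def al be by (simp add: field_simps)
  have n2: "\<bar>E + 6*u\<bar> \<le> 32 * (\<bar>u\<bar> / c)" using Eb uc by linarith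
  have den2: "2*\<alpha> \<ge> 1" using a_ge by linarith
  have "\<bar>(E + 6*u) / (2*\<alpha>)\<bar> = \<bar>E + 6*u\<bar> / (2*\<alpha>)" using den2 by (simp add: abs_div)
  also have "\<dots> \<le> 32 * (\<bar>u\<bar> / c) / 1"
    by (rule frac_le[OF _ n2 _ den2]) (use c in auto)
  also have "\<dots> \<le> 32 * w" unfolding w_def using ucc by simp
  also have "\<dots> < \<delta>" using w md d by linarith
  finally show "\<bar>(\<beta> + sqrt (\<beta>\<^sup>2 - 4*\<alpha>*\<gamma>)) / (2*\<alpha>) - 1\<bar> < \<delta>"
    using eq2 by (simp add: s_def D_def)
qed

lemma ev_real_ge: "\<forall>\<^sub>F N in sequentially. X \<le> real N"
proof (rule eventually_mono[OF eventually_ge_at_top[of "nat \<lceil>X\<rceil>"]])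
  fix N assume "nat \<lceil>X\<rceil> \<le> N"
  then have "real (nat \<lceil>X\<rceil>) \<le> real N" by simp
  then show "X \<le> real N" using real_nat_ceiling_ge[of X] by linarith
qed

lemma meas_prior[measurable]: "beta_prior_density a \<in> borel_measurable borel"
  unfolding beta_prior_density_def by measurable

lemma sets_Pm[simp, measurable_cong]: "sets (Pm a) = sets borel"
  by (simp add: Pm_def)

lemma space_Pm[simp]: "space (Pm a) = UNIV"
  by (simp add: Pm_def)

lemma P_emeasure:
  assumes a: "a > 0"
  shows "emeasure (Pm a) {0<..<1} = 1" "emeasure (Pm a) UNIV = 1"
proof -
  define B where "B = Beta a a"
  have B: "B > 0" using a by (simp add: B_def Beta_def)
  define h where "h t = t powr (a - 1) * (1 - t) powr (a - 1) * (1 / B)" for t :: real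
  have hi: "(h has_integral 1) {0..1}"
    using has_integral_mult_left[OF has_integral_Beta_real[OF a a], of "1/B"] B
    unfolding h_def B_def by simp
  have nn: "(\<integral>\<^sup>+x. ennreal (h x) * indicator {0..1} x \<partial>lborel) = 1"
    using nn_integral_has_integral_lebesgue'[OF _ hi] B by (simp add: h_def)
  have AE: "AE x in lborel. ennreal (beta_prior_density a x) * indicator A x = ennreal (h x) * indicator {0..1} x"
    if "{0<..<1} \<subseteq> A" for A
    using AE_lborel_singleton[of 0] AE_lborel_singleton[of 1]
  proof eventually_elim
    case (elim x)
    show ?case
    proof (cases "0 < x \<and> x < 1")
      case True
      then show ?thesis using that by (auto simp: beta_prior_density_def h_def B_def indicator_def)
    next
      case False
      then have "x \<notin> {0..1}" using elim by auto
      then show ?thesis using that by (auto simp: beta_prior_density_def indicator_def)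
    qed
  qed
  have "emeasure (Pm a) {0<..<1} = (\<integral>\<^sup>+x. ennreal (beta_prior_density a x) * indicator {0<..<1} x \<partial>lborel)"
    unfolding Pm_def by (rule emeasure_density) auto
  also have "\<dots> = 1" using nn by (subst nn_integral_cong_AE[OF AE[OF order_refl]]) auto
  finally show "emeasure (Pm a) {0<..<1} = 1" .
  have "emeasure (Pm a) UNIV = (\<integral>\<^sup>+x. ennreal (beta_prior_density a x) * indicator UNIV x \<partial>lborel)"
    unfolding Pm_def by (rule emeasure_density) auto
  also have "\<dots> = 1" using nn by (subst nn_integral_cong_AE[OF AE[OF subset_UNIV]]) auto
  finally show "emeasure (Pm a) UNIV = 1" .
qed

lemma prob_Pm: "a > 0 \<Longrightarrow> prob_space (Pm a)"
  by (rule prob_spaceI) (simp add: P_emeasure)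

lemma P_inner:
  assumes a: "a > 0" and e: "e > 0"
  shows "\<exists>c>0. c \<le> 1/4 \<and> ennreal (1 - e) < emeasure (Pm a) {c..1-c}"
proof -
  define A where "A n = {1/(real n+4) .. 1 - 1/(real n + 4)}" for n :: nat
  have inc: "incseq A"
  proof (rule incseq_SucI)
    fix n
    have "1/(real (Suc n) + 4) \<le> 1/(real n + 4)" by (rule divide_left_mono) auto
    then show "A n \<subseteq> A (Suc n)" unfolding A_def by auto
  qed
  have U1: "(\<Union>n. A n) \<subseteq> {0<..<1}"
  proof
    fix x assume "x \<in> (\<Union>n. A n)"
    then obtain n where "x \<in> A n" by blast
    define q where "q = 1/(real n+4)"
    have "q \<le> x" "x \<le> 1 - q" using \<open>x \<in> A n\<close> by (simp_all add: A_def q_def)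
    moreover have "0 < q" by (simp add: q_def)
    ultimately show "x \<in> {0<..<1}" by simp
  qed
  have U2: "{0<..<1} \<subseteq> (\<Union>n. A n)"
  proof
    fix x :: real assume "x \<in> {0<..<1}"
    then have x: "0 < x" "x < 1" by auto
    define m where "m = min x (1 - x)"
    have m: "m > 0" using x by (simp add: m_def)
    obtain n :: nat where n: "1/m < real n" using reals_Archimedean2 by blast
    have "1/m < real n + 4" using n by simp
    then have "1/(real n + 4) < m" using m by (simp add: field_simps)
    then have "x \<in> A n" unfolding A_def m_def by auto
    then show "x \<in> (\<Union>n. A n)" by blast
  qed
  have U: "(\<Union>n. A n) = {0<..<1}" using U1 U2 by blast
  have "(\<lambda>n. emeasure (Pm a) (A n)) \<longlonglongrightarrow> emeasure (Pm a) (\<Union>n. A n)"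
    by (rule Lim_emeasure_incseq[OF _ inc]) (auto simp: A_def)
  then have lim: "(\<lambda>n. emeasure (Pm a) (A n)) \<longlonglongrightarrow> 1" using U P_emeasure[OF a] by simp
  have "ennreal (1 - e) < 1" using e by simp
  from order_tendstoD(1)[OF lim this] obtain n where "ennreal (1 - e) < emeasure (Pm a) (A n)"
    by (auto simp: eventually_sequentially)
  moreover have "0 < 1/(real n + 4)" "1/(real n + 4) \<le> 1/4" by (auto intro: divide_left_mono)
  ultimately show ?thesis unfolding A_def by blast
qed

definition Gset :: "real \<Rightarrow> nat \<Rightarrow> (real \<times> (nat \<Rightarrow> real)) set" where
  "Gset c N = {\<omega> \<in> space (Sm N). c \<le> fst \<omega> \<and> fst \<omega> \<le> 1 - c \<and> \<bar>gamma_stat N (snd \<omega>) - fst \<omega>\<bar> < c/2}"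

lemma Gset_sets: "Gset c N \<in> sets (Sm N)"
  unfolding Gset_def Sm_def by measurable

lemma J_facts:
  assumes a: "a > 0"
  shows "sets (joint_model a N) = sets (Sm N)"
    and "space (joint_model a N) = space (Sm N)"
    and "subprob_space (joint_model a N)"
    and "X \<in> sets (Sm N) \<Longrightarrow> emeasure (joint_model a N) X = (\<integral>\<^sup>+t. emeasure (kern N t) X \<partial>Pm a)"
proof -
  have km: "kern N \<in> measurable (Pm a) (subprob_algebra (Sm N))"
    using kern_meas[of N] by (simp cong: measurable_cong_sets)
  have ne: "space (Pm a) \<noteq> {}" by simp
  show "sets (joint_model a N) = sets (Sm N)" unfolding joint_alt by (rule sets_bind_measurable[OF km ne])
  show "space (joint_model a N) = space (Sm N)" unfolding joint_alt by (rule space_bind_measurable[OF km ne])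
  show "subprob_space (joint_model a N)" unfolding joint_alt
    by (rule subprob_space_bind[OF _ km]) (rule prob_space_imp_subprob_space[OF prob_Pm[OF a]])
  show "X \<in> sets (Sm N) \<Longrightarrow> emeasure (joint_model a N) X = (\<integral>\<^sup>+t. emeasure (kern N t) X \<partial>Pm a)"
    unfolding joint_alt by (rule emeasure_bind[OF ne km])
qed

lemma KEY:
  assumes a: "a > 0" and e: "e > 0"
  shows "\<exists>c>0. c \<le> 1/4 \<and> (\<forall>\<^sub>F N in sequentially. 1 - e \<le> measure (joint_model a N) (Gset c N))"
proof (cases "e < 2")
  case False
  have "1 - e \<le> measure (joint_model a N) (Gset (1/4) N)" for N
    using False by (smt (verit) measure_nonneg)
  then show ?thesis by (intro exI[of _ "1/4"]) auto
next
  case True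
  obtain c where c: "c > 0" "c \<le> 1/4" and Pc: "ennreal (1 - e/2) < emeasure (Pm a) {c..1-c}"
    using P_inner[OF a, of "e/2"] e by auto
  define \<eta> where "\<eta> = c/2"
  have eta: "\<eta> > 0" using c by (simp add: \<eta>_def)
  have ev: "\<forall>\<^sub>F N in sequentially. real N \<ge> 4 / (e * \<eta>\<^sup>2) + 1"
    by (rule ev_real_ge)
  show ?thesis
  proof (intro exI[of _ c] conjI c)
    show "\<forall>\<^sub>F N in sequentially. 1 - e \<le> measure (joint_model a N) (Gset c N)"
      using ev
    proof eventually_elim
      case (elim N)
      have "4 / (e * \<eta>\<^sup>2) > 0" using e eta by simp
      then have N: "0 < N" using elim by linarith
      have bnd: "2 / (real N * \<eta>\<^sup>2) \<le> e/2"
      proof -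
        have "4 / (e * \<eta>\<^sup>2) \<le> real N" using elim by simp
        then have "4 \<le> real N * (e * \<eta>\<^sup>2)" using e eta by (simp add: pos_divide_le_eq)
        then show ?thesis using N e eta by (simp add: pos_divide_le_eq field_simps)
      qed
      have pt: "ennreal (1 - e/2) * indicator {c..1-c} t \<le> emeasure (kern N t) (Gset c N)" for t
      proof (cases "t \<in> {c..1-c}")
        case False then show ?thesis by simp
      next
        case True
        have tt: "0 < t" "t \<le> 1" using True c by auto
        have "{x \<in> space (Qm N t). (t, x) \<in> Gset c N} = {x \<in> space (Qm N t). \<bar>gamma_stat N x - t\<bar> < \<eta>}"
          using True by (auto simp: Gset_def Sm_def space_pair_measure \<eta>_def)
        then have "emeasure (kern N t) (Gset c N) = emeasure (Qm N t) {x \<in> space (Qm N t). \<bar>gamma_stat N x - t\<bar> < \<eta>}"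
          by (simp add: emeasure_kern[OF Gset_sets])
        moreover have "ennreal (1 - e/2) \<le> ennreal (1 - 2 / (real N * \<eta>\<^sup>2))"
          using bnd by (intro ennreal_leI) simp
        ultimately show ?thesis using cheb[OF tt N eta] True by simp
      qed
      interpret J: subprob_space "joint_model a N" by (rule J_facts(3)[OF a])
      have "ennreal (1 - e/2) * ennreal (1 - e/2) \<le> ennreal (1 - e/2) * emeasure (Pm a) {c..1-c}"
        using Pc by (intro mult_left_mono) auto
      also have "\<dots> = (\<integral>\<^sup>+t. ennreal (1 - e/2) * indicator {c..1-c} t \<partial>Pm a)"
        by (rule nn_integral_cmult_indicator[symmetric]) simp
      also have "\<dots> \<le> (\<integral>\<^sup>+t. emeasure (kern N t) (Gset c N) \<partial>Pm a)"
        by (intro nn_integral_mono pt)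
      also have "\<dots> = emeasure (joint_model a N) (Gset c N)"
        by (rule J_facts(4)[OF a Gset_sets, symmetric])
      also have "\<dots> = ennreal (measure (joint_model a N) (Gset c N))"
        by (rule J.emeasure_eq_measure)
      finally have "(1 - e/2) * (1 - e/2) \<le> measure (joint_model a N) (Gset c N)"
        using True by (simp add: ennreal_mult'[symmetric] ennreal_le_iff)
      moreover have "1 - e \<le> (1 - e/2) * (1 - e/2)" by (simp add: algebra_simps)
      ultimately show ?case by linarith
    qed
  qed
qed


lemma lim_of_G:
  assumes a: "a > 0" and Hs: "\<And>N. H N \<in> sets (Sm N)"
    and incl: "\<And>c. 0 < c \<Longrightarrow> c \<le> 1/4 \<Longrightarrow> \<forall>\<^sub>F N in sequentially. Gset c N \<subseteq> H N"
  shows "(\<lambda>N. measure (joint_model a N) (H N)) \<longlonglongrightarrow> 1"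
proof (rule tendstoI)
  fix e :: real assume e: "0 < e"
  obtain c where c: "c > 0" "c \<le> 1/4"
    and ev: "\<forall>\<^sub>F N in sequentially. 1 - e/2 \<le> measure (joint_model a N) (Gset c N)"
    using KEY[OF a, of "e/2"] e by auto
  show "\<forall>\<^sub>F N in sequentially. dist (measure (joint_model a N) (H N)) 1 < e"
    using ev incl[OF c]
  proof eventually_elim
    case (elim N)
    interpret J: subprob_space "joint_model a N" by (rule J_facts(3)[OF a])
    have "measure (joint_model a N) (Gset c N) \<le> measure (joint_model a N) (H N)"
      by (rule J.finite_measure_mono[OF elim(2)]) (simp add: J_facts(1)[OF a] Hs)
    moreover have "measure (joint_model a N) (H N) \<le> 1" by (rule J.subprob_measure_le_1)
    ultimately show ?case using elim(1) e unfolding dist_real_def by arith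
  qed
qed

lemma ev_small:
  assumes k: "k > 0"
  shows "\<forall>\<^sub>F N in sequentially. \<bar>b / real N\<bar> \<le> k"
  using ev_real_ge[of "\<bar>b\<bar>/k + 1"]
proof eventually_elim
  case (elim N)
  have "\<bar>b\<bar>/k \<ge> 0" using k by simp
  then have N: "real N > 0" using elim by linarith
  have "\<bar>b\<bar>/k \<le> real N" using elim by linarith
  then have "\<bar>b\<bar> \<le> real N * k" using k by (simp add: pos_divide_le_eq)
  then have "\<bar>b\<bar> / real N \<le> k" using N by (simp add: pos_divide_le_eq mult.commute)
  then show ?case by (simp add: abs_div)
qed

theorem proposition2:
  fixes a :: real
  assumes "a > 0"
  shows "(\<exists>\<epsilon> :: nat \<Rightarrow> real \<times> (nat \<Rightarrow> real) \<Rightarrow> real.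
            (\<forall>\<^sub>F N in sequentially. real N \<noteq> 4 * (a - 1) \<and>
               (\<forall>\<omega>\<in>space (joint_model a N).
                  theta_MAP a N (snd \<omega>) = gamma_stat N (snd \<omega>) * (1 + \<epsilon> N \<omega>))) \<and>
            (\<forall>\<delta>>0. (\<lambda>N. measure (joint_model a N)
                        {\<omega> \<in> space (joint_model a N). \<bar>\<epsilon> N \<omega>\<bar> < \<delta>}) \<longlonglongrightarrow> 1))
       \<and> (\<forall>\<delta>>0. (\<lambda>N. measure (joint_model a N)
                   {\<omega> \<in> space (joint_model a N). \<bar>theta_2 a N (snd \<omega>) - 1\<bar> < \<delta>}) \<longlonglongrightarrow> 1)"
proof -
  have a: "a > 0" by fact
  define \<epsilon> where "\<epsilon> N \<omega> = (if gamma_stat N (snd \<omega>) = 0 then 0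
      else theta_MAP a N (snd \<omega>) / gamma_stat N (snd \<omega>) - 1)" for N :: nat and \<omega> :: "real \<times> (nat \<Rightarrow> real)"
  have A: "\<forall>\<^sub>F N in sequentially. real N \<noteq> 4 * (a - 1) \<and>
               (\<forall>\<omega>\<in>space (joint_model a N).
                  theta_MAP a N (snd \<omega>) = gamma_stat N (snd \<omega>) * (1 + \<epsilon> N \<omega>))"
    using ev_real_ge[of "4 * \<bar>a - 1\<bar> + 1"]
  proof eventually_elim
    case (elim N)
    have Npos: "real N > 0" using elim by (smt (verit) abs_ge_zero)
    have eqx: "theta_MAP a N x = gamma_stat N x * (1 + (if gamma_stat N x = 0 then 0
      else theta_MAP a N x / gamma_stat N x - 1))" for x
    proof (cases "gamma_stat N x = 0")
      case True
      have "4 * \<bar>a - 1\<bar> \<le> real N" using elim by linarith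
      then have "2 * \<bar>a - 1\<bar> \<le> real N / 2" by linarith
      then have "2 * \<bar>a - 1\<bar> / real N \<le> 1/2" using Npos by (simp add: pos_divide_le_eq)
      moreover have "2 * (a - 1) / real N \<le> 2 * \<bar>a - 1\<bar> / real N"
      proof (rule divide_right_mono)
        show "2 * (a - 1) \<le> 2 * \<bar>a - 1\<bar>" using abs_ge_self[of "a - 1"] by (smt (verit))
      qed (use Npos in simp)
      ultimately have "beta_coef a N x \<ge> 0" unfolding beta_coef_def using True by linarith
      then show ?thesis using True by (simp add: theta_MAP_def)
    next
      case False
      then show ?thesis by simp
    qed
    have "real N \<noteq> 4 * (a - 1)" using elim by (smt (verit) abs_ge_self)
    then show ?case using eqx by (simp add: \<epsilon>_def)
  qed
  have B: "\<forall>\<delta>>0. (\<lambda>N. measure (joint_model a N)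
                        {\<omega> \<in> space (joint_model a N). \<bar>\<epsilon> N \<omega>\<bar> < \<delta>}) \<longlonglongrightarrow> 1"
  proof (intro allI impI)
    fix \<delta> :: real assume d: "\<delta> > 0"
    show "(\<lambda>N. measure (joint_model a N) {\<omega> \<in> space (joint_model a N). \<bar>\<epsilon> N \<omega>\<bar> < \<delta>}) \<longlonglongrightarrow> 1"
    proof (rule lim_of_G[OF a])
      fix N
      show "{\<omega> \<in> space (joint_model a N). \<bar>\<epsilon> N \<omega>\<bar> < \<delta>} \<in> sets (Sm N)"
        unfolding J_facts(2)[OF a] \<epsilon>_def theta_MAP_def beta_coef_def alpha_coef_def Sm_def
        by measurable
    next
      fix c :: real assume c: "0 < c" "c \<le> 1/4"
      define k where "k = min (1/8) (c\<^sup>2 * min \<delta> 1 / 200)"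
      have k: "k > 0" using c d by (simp add: k_def)
      show "\<forall>\<^sub>F N in sequentially. Gset c N \<subseteq> {\<omega> \<in> space (joint_model a N). \<bar>\<epsilon> N \<omega>\<bar> < \<delta>}"
        using ev_small[OF k, of "a - 1"]
      proof eventually_elim
        case (elim N)
        show ?case
        proof
          fix \<omega> assume "\<omega> \<in> Gset c N"
          then have om: "\<omega> \<in> space (Sm N)" "c \<le> fst \<omega>" "fst \<omega> \<le> 1 - c"
            "\<bar>gamma_stat N (snd \<omega>) - fst \<omega>\<bar> < c/2" by (auto simp: Gset_def)
          have g: "c/2 \<le> gamma_stat N (snd \<omega>)" "gamma_stat N (snd \<omega>) \<le> 1 - c/2" using om by arith+
          have u: "\<bar>(a-1)/real N\<bar> \<le> 1/8" "\<bar>(a-1)/real N\<bar> \<le> c\<^sup>2 * min \<delta> 1 / 200"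
            using elim k_def by auto
          have al: "alpha_coef a N = 1 - 4*((a-1)/real N)" by (simp add: alpha_coef_def)
          have be: "beta_coef a N (snd \<omega>) = 1 - 2*((a-1)/real N) + gamma_stat N (snd \<omega>)"
            by (simp add: beta_coef_def)
          note det(1)[OF c d g u al be]
          moreover have "gamma_stat N (snd \<omega>) \<noteq> 0" using g c by auto
          ultimately have "\<bar>\<epsilon> N \<omega>\<bar> < \<delta>" by (simp add: \<epsilon>_def theta_MAP_def)
          then show "\<omega> \<in> {\<omega> \<in> space (joint_model a N). \<bar>\<epsilon> N \<omega>\<bar> < \<delta>}"
            using om J_facts(2)[OF a] by auto
        qed
      qed
    qed
  qed
  have C: "\<forall>\<delta>>0. (\<lambda>N. measure (joint_model a N)
                   {\<omega> \<in> space (joint_model a N). \<bar>theta_2 a N (snd \<omega>) - 1\<bar> < \<delta>}) \<longlonglongrightarrow> 1"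
  proof (intro allI impI)
    fix \<delta> :: real assume d: "\<delta> > 0"
    show "(\<lambda>N. measure (joint_model a N) {\<omega> \<in> space (joint_model a N). \<bar>theta_2 a N (snd \<omega>) - 1\<bar> < \<delta>}) \<longlonglongrightarrow> 1"
    proof (rule lim_of_G[OF a])
      fix N
      show "{\<omega> \<in> space (joint_model a N). \<bar>theta_2 a N (snd \<omega>) - 1\<bar> < \<delta>} \<in> sets (Sm N)"
        unfolding J_facts(2)[OF a] theta_2_def beta_coef_def alpha_coef_def Sm_def
        by measurable
    next
      fix c :: real assume c: "0 < c" "c \<le> 1/4"
      define k where "k = min (1/8) (c\<^sup>2 * min \<delta> 1 / 200)"
      have k: "k > 0" using c d by (simp add: k_def)
      show "\<forall>\<^sub>F N in sequentially. Gset c N \<subseteq> {\<omega> \<in> space (joint_model a N). \<bar>theta_2 a N (snd \<omega>) - 1\<bar> < \<delta>}"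
        using ev_small[OF k, of "a - 1"]
      proof eventually_elim
        case (elim N)
        show ?case
        proof
          fix \<omega> assume "\<omega> \<in> Gset c N"
          then have om: "\<omega> \<in> space (Sm N)" "c \<le> fst \<omega>" "fst \<omega> \<le> 1 - c"
            "\<bar>gamma_stat N (snd \<omega>) - fst \<omega>\<bar> < c/2" by (auto simp: Gset_def)
          have g: "c/2 \<le> gamma_stat N (snd \<omega>)" "gamma_stat N (snd \<omega>) \<le> 1 - c/2" using om by arith+
          have u: "\<bar>(a-1)/real N\<bar> \<le> 1/8" "\<bar>(a-1)/real N\<bar> \<le> c\<^sup>2 * min \<delta> 1 / 200"
            using elim k_def by auto
          have al: "alpha_coef a N = 1 - 4*((a-1)/real N)" by (simp add: alpha_coef_def)
          have be: "beta_coef a N (snd \<omega>) = 1 - 2*((a-1)/real N) + gamma_stat N (snd \<omega>)"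
            by (simp add: beta_coef_def)
          note det(2)[OF c d g u al be]
          then have "\<bar>theta_2 a N (snd \<omega>) - 1\<bar> < \<delta>" by (simp add: theta_2_def)
          then show "\<omega> \<in> {\<omega> \<in> space (joint_model a N). \<bar>theta_2 a N (snd \<omega>) - 1\<bar> < \<delta>}"
            using om J_facts(2)[OF a] by auto
        qed
      qed
    qed
  qed
  show ?thesis using A B C by blast
qed

end
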